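(* Let $\mathcal A$ be an ordered normed algebra with unit $e$ whose algebra cone $\mathcal A^+$ is normal with normality constant $\alpha$. Let $a,b\in\mathcal A$, with at least one of $a$ and $b$ positive, and suppose that for some $\varepsilon>0$ there exists $x\in\mathcal A$ with $\|x\|\leq\varepsilon$ such that $ab-ba\geq e+x$. Then $$\|a\|\cdot\|b\|\geq \frac{1}{2\alpha}\ln\frac{1}{\alpha\varepsilon}.$$ In particular, if the norm on $\mathcal A$ is monotone, then $\|a\|\cdot\|b\|\geq \frac12\ln\frac1\varepsilon$.
   Context: A normed algebra $\mathcal A$ (real or complex, with submultiplicative norm) with unit $e$. A cone is a nonempty subset $\mathcal A^+\subseteq\mathcal A$ with $\mathcal A^++\mathcal A^+\subseteq\mathcal A^+$, $\lambda\mathcal A^+\subseteq\mathcal A^+$ for all $\lambda\geq 0$, and $\mathcal A^+\cap(-\mathcal A^+)=\{0\}$; it induces the partial order $a\leq b \iff b-a\in\mathcal A^+$. Elements of $\mathcal A^+$ are called positive. The cone is an algebra cone if $\mathcal A^+\cdot\mathcal A^+\subseteq\mathcal A^+$ and $e\in\mathcal A^+$; then $\mathcal A$ is called an ordered normed algebra. The cone is normal with normality constant $\alpha$ (necessarily $\alpha\ge 1$) if $0\leq x\leq y$ implies $\|x\|\leq\alpha\|y\|$. The norm is monotone if one can take $\alpha=1$. *)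

theory Defs
  imports Complex_Main
begin

text \<open>A unital (real) normed algebra is modelled by the type class
  {real_normed_algebra, real_algebra_1}: submultiplicative norm, unit 1 with 1 \<noteq> 0,
  but the norm of the unit is NOT required to be 1. Complex normed algebras are
  in particular real normed algebras.\<close>

definition cone :: "'a::real_vector set \<Rightarrow> bool" where
  "cone C \<longleftrightarrow> C \<noteq> {} \<and> (\<forall>x\<in>C. \<forall>y\<in>C. x + y \<in> C)
     \<and> (\<forall>l::real. l \<ge> 0 \<longrightarrow> (\<forall>x\<in>C. l *\<^sub>R x \<in> C))
     \<and> C \<inter> uminus ` C = {0}"

definition algebra_cone :: "'a::real_algebra_1 set \<Rightarrow> bool" where
  "algebra_cone C \<longleftrightarrow> cone C \<and> (\<forall>x\<in>C. \<forall>y\<in>C. x * y \<in> C) \<and> 1 \<in> C"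

definition cone_le :: "'a::real_vector set \<Rightarrow> 'a \<Rightarrow> 'a \<Rightarrow> bool" where
  "cone_le C a b \<longleftrightarrow> b - a \<in> C"

definition normal_cone :: "'a::real_normed_vector set \<Rightarrow> real \<Rightarrow> bool" where
  "normal_cone C \<alpha> \<longleftrightarrow> (\<forall>x y. cone_le C 0 x \<and> cone_le C x y \<longrightarrow> norm x \<le> \<alpha> * norm y)"

end

theory Submission
  imports Defs
begin
lemma real_part:
  fixes f :: "nat \<Rightarrow> real"
  assumes al: "\<alpha> > 0" and ep: "\<epsilon> > 0" and u: "u \<ge> 0" and B: "B \<ge> 0"
    and rec: "\<And>n. real (Suc n) * f n \<le> \<alpha> * (2 * f (Suc n) * B + real (Suc n) * \<epsilon> * u ^ n)"
    and f0: "f 0 \<ge> 1" and fb: "\<And>n. f (Suc n) \<le> u ^ Suc n"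
  shows "2 * \<alpha> * (u * B) \<ge> ln (1 / (\<alpha> * \<epsilon>))"
proof -
  define K where "K = 2 * \<alpha> * B"
  define M where "M = K * u"
  have K0: "K \<ge> 0" using al B by (simp add: K_def)
  have M0: "M \<ge> 0" using K0 u by (simp add: M_def)
  define d where "d n = f n * K ^ n / fact n" for n
  have step: "d n \<le> d (Suc n) + \<alpha> * \<epsilon> * (M ^ n / fact n)" for n
  proof -
    have "real (Suc n) * f n * (K ^ n / fact (Suc n)) \<le>
      \<alpha> * (2 * f (Suc n) * B + real (Suc n) * \<epsilon> * u ^ n) * (K ^ n / fact (Suc n))"
      using rec[of n] K0 by (intro mult_right_mono) auto
    moreover have "real (Suc n) * f n * (K ^ n / fact (Suc n)) = d n"
      unfolding d_def using fact_gt_zero[of n, where 'a=real] by (simp add: fact_Suc field_simps del: of_nat_Suc)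
    moreover have "\<alpha> * (2 * f (Suc n) * B + real (Suc n) * \<epsilon> * u ^ n) * (K ^ n / fact (Suc n))
       = d (Suc n) + \<alpha> * \<epsilon> * (M ^ n / fact n)"
      unfolding d_def M_def K_def using fact_gt_zero[of n, where 'a=real] by (simp add: fact_Suc field_simps power_mult_distrib del: of_nat_Suc)
    ultimately show ?thesis by simp
  qed
  have lowb: "d 0 - \<alpha> * \<epsilon> * (\<Sum>k<n. M ^ k / fact k) \<le> d n" for n
  proof (induction n)
    case 0 then show ?case by simp
  next
    case (Suc n) then show ?case using step[of n] by (simp add: algebra_simps)
  qed
  have summ: "summable (\<lambda>k. M ^ k / fact k)"
    using summable_exp[of M] by (simp add: divide_inverse mult.commute)
  have sexp: "(\<Sum>k<n. M ^ k / fact k) \<le> exp M" for n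
  proof -
    have "(\<Sum>k<n. M ^ k / fact k) \<le> (\<Sum>k. M ^ k / fact k)"
      using summ M0 by (intro sum_le_suminf) auto
    also have "\<dots> = exp M" using exp_converges[of M, THEN sums_unique]
      by (simp add: divide_inverse mult.commute)
    finally show ?thesis .
  qed
  have d0: "d 0 \<ge> 1" using f0 by (simp add: d_def)
  have ub: "d (Suc n) \<le> M ^ Suc n / fact (Suc n)" for n
  proof -
    have "d (Suc n) = f (Suc n) * K ^ Suc n / fact (Suc n)" by (simp add: d_def)
    also have "\<dots> \<le> u ^ Suc n * K ^ Suc n / fact (Suc n)"
      using fb[of n] K0 by (intro divide_right_mono mult_right_mono) auto
    also have "\<dots> = M ^ Suc n / fact (Suc n)" by (simp add: M_def power_mult_distrib mult.commute)
    finally show ?thesis .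
  qed
  have key: "1 - \<alpha> * \<epsilon> * exp M \<le> M ^ Suc n / fact (Suc n)" for n
  proof -
    have "\<alpha> * \<epsilon> * (\<Sum>k<Suc n. M ^ k / fact k) \<le> \<alpha> * \<epsilon> * exp M"
      using sexp[of "Suc n"] al ep by (intro mult_left_mono) auto
    then show ?thesis using lowb[of "Suc n"] d0 ub[of n] by linarith
  qed
  have lim0: "(\<lambda>n. M ^ Suc n / fact (Suc n)) \<longlonglongrightarrow> 0"
    using summable_LIMSEQ_zero[OF summ] by (rule LIMSEQ_Suc)
  have "1 - \<alpha> * \<epsilon> * exp M \<le> 0"
    using lim0 key by (intro tendsto_lowerbound[where F=sequentially]) (auto intro: always_eventually)
  then have "1 / (\<alpha> * \<epsilon>) \<le> exp M" using al ep by (simp add: field_simps)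
  then have "ln (1 / (\<alpha> * \<epsilon>)) \<le> M" using al ep
    by (metis ln_exp ln_le_cancel_iff divide_pos_pos exp_gt_zero zero_less_one mult_pos_pos)
  then show ?thesis by (simp add: M_def K_def algebra_simps)
qed

lemma cone_facts:
  fixes C :: "'a::{real_normed_algebra, real_algebra_1} set"
  assumes "algebra_cone C"
  shows cone_0: "0 \<in> C" and cone_add: "\<And>x y. x \<in> C \<Longrightarrow> y \<in> C \<Longrightarrow> x + y \<in> C"
    and cone_scale: "\<And>l x. l \<ge> 0 \<Longrightarrow> x \<in> C \<Longrightarrow> l *\<^sub>R x \<in> C"
    and cone_mult: "\<And>x y. x \<in> C \<Longrightarrow> y \<in> C \<Longrightarrow> x * y \<in> C"
    and cone_1: "1 \<in> C"
  using assms unfolding algebra_cone_def cone_def by auto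

lemma cone_sum:
  fixes C :: "'a::{real_normed_algebra, real_algebra_1} set"
  assumes "algebra_cone C" "\<And>k. k \<in> A \<Longrightarrow> g k \<in> C"
  shows "sum g A \<in> C"
  using assms(2)
proof (induction A rule: infinite_finite_induct)
  case (infinite A) then show ?case using cone_0[OF assms(1)] by simp
next
  case empty then show ?case using cone_0[OF assms(1)] by simp
next
  case (insert x F) then show ?case using cone_add[OF assms(1)] by simp
qed

lemma cone_power:
  fixes C :: "'a::{real_normed_algebra, real_algebra_1} set"
  assumes "algebra_cone C" "p \<in> C"
  shows "p ^ n \<in> C"
  by (induction n) (auto intro: cone_mult[OF assms(1)] cone_1[OF assms(1)] assms(2))

lemma norm_pow_left:
  fixes p y :: "'a::{real_normed_algebra, real_algebra_1}"
  shows "norm (p ^ k * y) \<le> norm p ^ k * norm y"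
proof (induction k)
  case 0 then show ?case by simp
next
  case (Suc k)
  have "norm (p ^ Suc k * y) = norm (p * (p ^ k * y))" by (simp add: mult.assoc)
  also have "\<dots> \<le> norm p * norm (p ^ k * y)" by (rule norm_mult_ineq)
  also have "\<dots> \<le> norm p * (norm p ^ k * norm y)" using Suc by (intro mult_left_mono) auto
  finally show ?case by (simp add: mult.assoc)
qed

lemma norm_pow_right:
  fixes p y :: "'a::{real_normed_algebra, real_algebra_1}"
  shows "norm (y * p ^ k) \<le> norm y * norm p ^ k"
proof (induction k)
  case 0 then show ?case by simp
next
  case (Suc k)
  have "norm (y * p ^ Suc k) = norm ((y * p ^ k) * p)" by (simp add: mult.assoc power_commutes)
  also have "\<dots> \<le> norm (y * p ^ k) * norm p" by (rule norm_mult_ineq)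
  also have "\<dots> \<le> (norm y * norm p ^ k) * norm p" using Suc by (intro mult_right_mono) auto
  finally show ?case by (simp add: mult.assoc power_commutes)
qed

lemma norm_one_ge:
  shows "norm (1::'a::{real_normed_algebra, real_algebra_1}) \<ge> 1"
proof -
  have "norm (1::'a) = norm ((1::'a) * 1)" by simp
  also have "\<dots> \<le> norm (1::'a) * norm (1::'a)" by (rule norm_mult_ineq)
  finally have "norm (1::'a) * 1 \<le> norm (1::'a) * norm (1::'a)" by simp
  moreover have "norm (1::'a) > 0" by simp
  ultimately show ?thesis by simp
qed

lemma commutator_sum:
  fixes p q :: "'a::{real_normed_algebra, real_algebra_1}"
  shows "p ^ Suc n * q - q * p ^ Suc n = (\<Sum>k<Suc n. p ^ k * (p * q - q * p) * p ^ (n - k))"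
proof (induction n)
  case 0 then show ?case by simp
next
  case (Suc n)
  have "(\<Sum>k<Suc (Suc n). p ^ k * (p * q - q * p) * p ^ (Suc n - k))
     = (p * q - q * p) * p ^ Suc n + (\<Sum>k<Suc n. p ^ Suc k * (p * q - q * p) * p ^ (n - k))"
    by (subst sum.lessThan_Suc_shift) simp
  also have "(\<Sum>k<Suc n. p ^ Suc k * (p * q - q * p) * p ^ (n - k))
     = p * (\<Sum>k<Suc n. p ^ k * (p * q - q * p) * p ^ (n - k))"
    by (simp only: sum_distrib_left mult.assoc power_Suc)
  also have "\<dots> = p * (p ^ Suc n * q - q * p ^ Suc n)" using Suc by simp
  finally show ?case
    by (simp add: algebra_simps power_Suc2[symmetric] del: power_Suc) (simp add: mult.assoc[symmetric])
qed


lemma key: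
  fixes C :: "'a::{real_normed_algebra, real_algebra_1} set"
  assumes ac: "algebra_cone C" and nc: "normal_cone C \<alpha>" and pC: "p \<in> C"
    and ep: "\<epsilon> > 0" and xe: "norm x \<le> \<epsilon>" and wC: "w - (1 + x) \<in> C"
    and S: "\<And>n. norm (\<Sum>k<Suc n. p ^ k * w * p ^ (n - k)) \<le> 2 * norm (p ^ Suc n) * norm q"
  shows "2 * \<alpha> * (norm p * norm q) \<ge> ln (1 / (\<alpha> * \<epsilon>))"
proof -
  note cf = cone_facts[OF ac]
  have "norm (1::'a) \<le> \<alpha> * norm (1::'a)"
    using nc cf unfolding normal_cone_def cone_le_def by auto
  then have al: "\<alpha> > 0" using norm_one_ge[where 'a='a] by (smt (verit) mult_le_cancel_right1)
  show ?thesis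
  proof (rule real_part[where f="\<lambda>n. norm (p ^ n)"])
    show "\<alpha> > 0" "\<epsilon> > 0" "norm p \<ge> 0" "norm q \<ge> 0" using al ep by auto
    show "1 \<le> norm (p ^ 0)" using norm_one_ge by simp
    show "norm (p ^ Suc n) \<le> norm p ^ Suc n" for n
      using norm_pow_left[of p n p] by (simp add: power_commutes)
    show "real (Suc n) * norm (p ^ n) \<le> \<alpha> * (2 * norm (p ^ Suc n) * norm q + real (Suc n) * \<epsilon> * norm p ^ n)" for n
    proof -
      define Sn where "Sn = (\<Sum>k<Suc n. p ^ k * w * p ^ (n - k))"
      define Y where "Y = (\<Sum>k<Suc n. p ^ k * x * p ^ (n - k))"
      define P where "P = real (Suc n) *\<^sub>R p ^ n"
      have PC: "P \<in> C" unfolding P_def using cf cone_power[OF ac pC] by simp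
      have eq: "Sn - Y - P = (\<Sum>k<Suc n. p ^ k * (w - (1 + x)) * p ^ (n - k))"
      proof -
        have "(\<Sum>k<Suc n. p ^ k * (w - (1 + x)) * p ^ (n - k))
          = Sn - Y - (\<Sum>k<Suc n. p ^ k * p ^ (n - k))"
          unfolding Sn_def Y_def by (simp add: algebra_simps sum_subtractf sum.distrib)
        also have "(\<Sum>k<Suc n. p ^ k * p ^ (n - k)) = (\<Sum>k<Suc n. p ^ n)"
          by (intro sum.cong) (auto simp: power_add[symmetric])
        also have "\<dots> = P" unfolding P_def by (simp add: scaleR_conv_of_real)
        finally show ?thesis by simp
      qed
      have "Sn - Y - P \<in> C" unfolding eq
        by (intro cone_sum[OF ac] cf(4) cone_power[OF ac pC] wC)
      then have "norm P \<le> \<alpha> * norm (Sn - Y)"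
        using nc PC unfolding normal_cone_def cone_le_def by auto
      moreover have "norm P = real (Suc n) * norm (p ^ n)" unfolding P_def by simp
      moreover have "norm Y \<le> real (Suc n) * \<epsilon> * norm p ^ n"
      proof -
        have "norm Y \<le> (\<Sum>k<Suc n. norm (p ^ k * x * p ^ (n - k)))"
          unfolding Y_def by (rule norm_sum)
        also have "\<dots> \<le> (\<Sum>k<Suc n. \<epsilon> * norm p ^ n)"
        proof (intro sum_mono)
          fix k assume k: "k \<in> {..<Suc n}"
          have "norm (p ^ k * x * p ^ (n - k)) \<le> norm (p ^ k * x) * norm p ^ (n - k)"
            by (rule norm_pow_right)
          also have "\<dots> \<le> (norm p ^ k * norm x) * norm p ^ (n - k)"
            by (intro mult_right_mono norm_pow_left) auto
          also have "\<dots> \<le> (norm p ^ k * \<epsilon>) * norm p ^ (n - k)"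
            using xe by (intro mult_right_mono mult_left_mono) auto
          also have "\<dots> = \<epsilon> * norm p ^ n"
            using k by (simp add: mult_ac power_add[symmetric])
          finally show "norm (p ^ k * x * p ^ (n - k)) \<le> \<epsilon> * norm p ^ n" .
        qed
        also have "\<dots> = real (Suc n) * \<epsilon> * norm p ^ n" by simp
        finally show ?thesis .
      qed
      moreover have "norm (Sn - Y) \<le> norm Sn + norm Y" by (rule norm_triangle_ineq4)
      moreover have "norm Sn \<le> 2 * norm (p ^ Suc n) * norm q" unfolding Sn_def by (rule S)
      ultimately show ?thesis using al
        by (smt (verit, best) mult_left_mono)
    qed
  qed
qed

theorem theorem2p4:
  fixes C :: "'a::{real_normed_algebra, real_algebra_1} set"
    and \<alpha> \<epsilon> :: real and a b x :: 'a
  assumes "algebra_cone C"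
    and "normal_cone C \<alpha>"
    and "a \<in> C \<or> b \<in> C"
    and "\<epsilon> > 0"
    and "norm x \<le> \<epsilon>"
    and "cone_le C (1 + x) (a * b - b * a)"
  shows "norm a * norm b \<ge> 1 / (2 * \<alpha>) * ln (1 / (\<alpha> * \<epsilon>)) \<and>
         (normal_cone C 1 \<longrightarrow> norm a * norm b \<ge> 1 / 2 * ln (1 / \<epsilon>))"
proof -
  have wC: "(a * b - b * a) - (1 + x) \<in> C" using assms(6) by (simp add: cone_le_def)
  have gen: "2 * \<beta> * (norm a * norm b) \<ge> ln (1 / (\<beta> * \<epsilon>))" if nb: "normal_cone C \<beta>" for \<beta>
  proof (cases "a \<in> C")
    case True
    show ?thesis
    proof (rule key[OF assms(1) nb True assms(4,5) wC])
      fix n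
      have "norm (\<Sum>k<Suc n. a ^ k * (a * b - b * a) * a ^ (n - k)) = norm (a ^ Suc n * b - b * a ^ Suc n)"
        by (simp only: commutator_sum)
      also have "\<dots> \<le> norm (a ^ Suc n * b) + norm (b * a ^ Suc n)" by (rule norm_triangle_ineq4)
      also have "\<dots> \<le> norm (a ^ Suc n) * norm b + norm b * norm (a ^ Suc n)"
        by (intro add_mono norm_mult_ineq)
      finally show "norm (\<Sum>k<Suc n. a ^ k * (a * b - b * a) * a ^ (n - k)) \<le> 2 * norm (a ^ Suc n) * norm b"
        by (simp add: mult_ac)
    qed
  next
    case False
    then have bC: "b \<in> C" using assms(3) by blast
    have "2 * \<beta> * (norm b * norm a) \<ge> ln (1 / (\<beta> * \<epsilon>))"
    proof (rule key[OF assms(1) nb bC assms(4,5) wC])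
      fix n
      have "(\<Sum>k<Suc n. b ^ k * (a * b - b * a) * b ^ (n - k))
          = - (\<Sum>k<Suc n. b ^ k * (b * a - a * b) * b ^ (n - k))"
        unfolding sum_negf[symmetric] by (intro sum.cong refl) (simp add: algebra_simps)
      also have "\<dots> = - (b ^ Suc n * a - a * b ^ Suc n)" by (simp only: commutator_sum)
      finally have "norm (\<Sum>k<Suc n. b ^ k * (a * b - b * a) * b ^ (n - k)) = norm (b ^ Suc n * a - a * b ^ Suc n)"
        by (simp add: norm_minus_commute)
      also have "\<dots> \<le> norm (b ^ Suc n * a) + norm (a * b ^ Suc n)" by (rule norm_triangle_ineq4)
      also have "\<dots> \<le> norm (b ^ Suc n) * norm a + norm a * norm (b ^ Suc n)"
        by (intro add_mono norm_mult_ineq)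
      finally show "norm (\<Sum>k<Suc n. b ^ k * (a * b - b * a) * b ^ (n - k)) \<le> 2 * norm (b ^ Suc n) * norm a"
        by (simp add: mult_ac)
    qed
    then show ?thesis by (simp add: mult.commute)
  qed
  have apos: "\<alpha> > 0"
  proof -
    have "norm (1::'a) \<le> \<alpha> * norm (1::'a)"
      using assms(2) cone_facts[OF assms(1)] unfolding normal_cone_def cone_le_def by auto
    then show ?thesis using norm_one_ge[where 'a='a] by (smt (verit) mult_le_cancel_right1)
  qed
  have 1: "norm a * norm b \<ge> 1 / (2 * \<alpha>) * ln (1 / (\<alpha> * \<epsilon>))"
    using gen[OF assms(2)] apos by (simp add: field_simps)
  have 2: "norm a * norm b \<ge> 1 / 2 * ln (1 / \<epsilon>)" if "normal_cone C 1"
    using gen[OF that] by simp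
  show ?thesis using 1 2 by blast
qed

end
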